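(* There exists $N_0\in\mathbb{N}$ such that for every $N\ge N_0$ the following holds. Let $y\in[0,1]$ and let $(a_i)\in\{0,1\}^{\mathbb{N}}$ be a binary expansion of $y$, i.e. $y=\sum_{i\ge1}a_i2^{-i}$, satisfying $\#\{1\le i\le n:a_i=0\}\ge 0.4\,n$ for all $n\ge N$. Then $\left[0,\frac{1}{56\cdot 2^N}\right]\subseteq K_y$, where $K_y:=\{x\in\mathbb{R}:(x,y)\in K\}$.
   Context: For $k\ge 0$ and $n\ge 1$ let $t_{k,n}:=\frac{1}{2^k n}$. Define the similarities of $\mathbb{R}^2$: $U(x,y)=\left(\frac{x}{2},\frac{y+1}{2}\right)$, $D_0(x,y)=\left(\frac{x}{2},\frac{y}{2}\right)$, and $D_{k,n}(x,y)=\left(\frac{x+t_{k,n}}{2},\frac{y}{2}\right)$ for $k\ge0,n\ge1$. $K$ is the unique non-empty compact set $K\subset\mathbb{R}^2$ satisfying $K=U(K)\cup D_0(K)\cup\bigcup_{k\ge0,n\ge1}D_{k,n}(K)$. *)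

theory Defs
  imports "HOL-Analysis.Analysis"
begin

definition tkn :: "nat \<Rightarrow> nat \<Rightarrow> real" where
  "tkn k n = 1 / (2 ^ k * real n)"

definition Umap :: "real \<times> real \<Rightarrow> real \<times> real" where
  "Umap p = (fst p / 2, (snd p + 1) / 2)"

definition D0map :: "real \<times> real \<Rightarrow> real \<times> real" where
  "D0map p = (fst p / 2, snd p / 2)"

definition Dmap :: "nat \<Rightarrow> nat \<Rightarrow> real \<times> real \<Rightarrow> real \<times> real" where
  "Dmap k n p = ((fst p + tkn k n) / 2, snd p / 2)"

definition Kset :: "(real \<times> real) set" where
  "Kset = (THE K. K \<noteq> {} \<and> compact K \<and>
      K = Umap ` K \<union> D0map ` K \<union> (\<Union>k. \<Union>n\<in>{1..}. Dmap k n ` K))"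

definition Kslice :: "real \<Rightarrow> real set" where
  "Kslice y = {x. (x, y) \<in> Kset}"

end

theory Submission imports Defs begin

definition Ts :: "real set" where "Ts = insert 0 (range (\<lambda>m. 1 / real (Suc m)))"
definition Cs :: "(real \<times> real) set" where "Cs = insert (0,1) ((\<lambda>t. (t,0)) ` Ts)"
definition hm :: "real \<times> real \<Rightarrow> real \<times> real \<Rightarrow> real \<times> real" where
  "hm p c = (1/2::real) *\<^sub>R (p + c)"
definition FF :: "(real \<times> real) set \<Rightarrow> (real \<times> real) set" where
  "FF A = (\<lambda>z. hm (fst z) (snd z)) ` (A \<times> Cs)"

lemma Ts_compact: "compact Ts"
  unfolding Ts_def by (rule compact_sequence_with_limit) (rule LIMSEQ_inverse_real_of_nat[unfolded inverse_eq_divide])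

lemma Cs_compact: "compact Cs"
  unfolding Cs_def by (intro compact_insert compact_continuous_image Ts_compact continuous_intros)

lemma tkn_in: "n \<ge> 1 \<Longrightarrow> tkn k n \<in> range (\<lambda>m. 1 / real (Suc m))"
proof -
  assume "n \<ge> 1"
  then have "2^k * n \<ge> (1::nat)" by (simp add: Suc_le_eq)
  then obtain m where m: "2^k*n = Suc m" by (cases "2^k*n") auto
  have "tkn k n = 1 / real (Suc m)" unfolding tkn_def using m[symmetric] by simp
  then show ?thesis by blast
qed

lemma FF_I:
  assumes "p \<in> K" "c \<in> Cs" shows "hm p c \<in> FF K"
proof -
  have "(p,c) \<in> K \<times> Cs" using assms by simp
  then have "(\<lambda>z. hm (fst z) (snd z)) (p,c) \<in> (\<lambda>z. hm (fst z) (snd z)) ` (K \<times> Cs)" by (rule imageI)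
  then show ?thesis unfolding FF_def by simp
qed

lemma F_eq: "Umap ` K \<union> D0map ` K \<union> (\<Union>k. \<Union>n\<in>{1..}. Dmap k n ` K) = FF K"
proof
  show "Umap ` K \<union> D0map ` K \<union> (\<Union>k. \<Union>n\<in>{1..}. Dmap k n ` K) \<subseteq> FF K"
  proof -
    have 1: "Umap ` K \<subseteq> FF K"
    proof (rule image_subsetI)
      fix p assume p: "p \<in> K"
      have "Umap p = hm p (0,1)" unfolding Umap_def hm_def by (cases p) simp
      moreover have "(0,1) \<in> Cs" by (simp add: Cs_def)
      ultimately show "Umap p \<in> FF K" using FF_I p by simp
    qed
    have 2: "D0map ` K \<subseteq> FF K"
    proof (rule image_subsetI)
      fix p assume p: "p \<in> K"
      have "D0map p = hm p (0,0)" unfolding D0map_def hm_def by (cases p) simp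
      moreover have "(0,0) \<in> Cs" by (simp add: Cs_def Ts_def)
      ultimately show "D0map p \<in> FF K" using FF_I p by simp
    qed
    have 3: "Dmap k n ` K \<subseteq> FF K" if n: "n \<in> {1::nat..}" for k n
    proof (rule image_subsetI)
      fix p assume p: "p \<in> K"
      have "Dmap k n p = hm p (tkn k n,0)" unfolding Dmap_def hm_def by (cases p) simp
      moreover have "(tkn k n,0) \<in> Cs" using tkn_in[of n k] n by (simp add: Cs_def Ts_def)
      ultimately show "Dmap k n p \<in> FF K" using FF_I p by simp
    qed
    show ?thesis using 1 2 3 by blast
  qed
next
  show "FF K \<subseteq> Umap ` K \<union> D0map ` K \<union> (\<Union>k. \<Union>n\<in>{1..}. Dmap k n ` K)"
  proof
    fix q assume "q \<in> FF K"
    then obtain p c where p: "p \<in> K" and c: "c \<in> Cs" and q: "q = hm p c" unfolding FF_def by auto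
    from c consider "c = (0,1)" | "c = (0,0)" | m where "c = (1/real (Suc m), 0)"
      unfolding Cs_def Ts_def by auto
    then show "q \<in> Umap ` K \<union> D0map ` K \<union> (\<Union>k. \<Union>n\<in>{1..}. Dmap k n ` K)"
    proof cases
      case 1
      have "q = Umap p" unfolding q 1 Umap_def hm_def by (cases p) simp
      then show ?thesis using p by blast
    next
      case 2
      have "q = D0map p" unfolding q 2 D0map_def hm_def by (cases p) simp
      then show ?thesis using p by blast
    next
      case (3 m)
      have "q = Dmap 0 (Suc m) p" unfolding q 3 Dmap_def hm_def tkn_def by (cases p) simp
      moreover have "Suc m \<in> {1..}" by simp
      ultimately show ?thesis using p by blast
    qed
  qed
qed

lemma FF_compact: "compact A \<Longrightarrow> compact (FF A)"
  unfolding FF_def hm_def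
  by (intro compact_continuous_image compact_Times Cs_compact continuous_intros)

lemma FF_mono: "A \<subseteq> B \<Longrightarrow> FF A \<subseteq> FF B"
  unfolding FF_def by auto

lemma hm_dist: "dist (hm p c) (hm q c) = dist p q / 2"
proof -
  have "hm p c - hm q c = (1/2::real) *\<^sub>R (p - q)" unfolding hm_def by (simp add: algebra_simps)
  then show ?thesis by (simp add: dist_norm)
qed


lemma uniq_sub:
  assumes K1: "compact K1" "K1 \<noteq> {}" "K1 = FF K1" and K2: "compact K2" "K2 \<noteq> {}" "K2 = FF K2"
  shows "K1 \<subseteq> K2"
proof
  have "bounded (K1 \<union> K2)" using K1 K2 by (simp add: compact_imp_bounded)
  then obtain B where B: "\<forall>x\<in>K1 \<union> K2. \<forall>y\<in>K1 \<union> K2. dist x y \<le> B" unfolding bounded_two_points by blast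
  obtain b0 where b0: "b0 \<in> K2" using K2 by blast
  have cl2: "closed K2" using K2 compact_imp_closed by blast
  have ind: "\<forall>a\<in>K1. infdist a K2 \<le> B / 2^n" for n
  proof (induction n)
    case 0
    show ?case using B b0 by (auto intro: infdist_le2)
  next
    case (Suc n)
    show ?case
    proof
      fix a assume a: "a \<in> K1"
      then have "a \<in> FF K1" using K1 by simp
      then obtain a' c where a': "a' \<in> K1" and c: "c \<in> Cs" and aeq: "a = hm a' c" unfolding FF_def by auto
      obtain b' where b': "b' \<in> K2" "infdist a' K2 = dist a' b'"
        using infdist_attains_inf[OF cl2 K2(2)] by metis
      have "hm b' c \<in> FF K2" using b'(1) c by (rule FF_I)
      then have "hm b' c \<in> K2" using K2 by simp
      then have "infdist a K2 \<le> dist a (hm b' c)" by (rule infdist_le)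
      also have "\<dots> = dist a' b' / 2" unfolding aeq hm_dist ..
      also have "\<dots> \<le> (B / 2^n) / 2"
      proof -
        have "dist a' b' \<le> B / 2^n" using Suc.IH a' b'(2) by auto
        then show ?thesis by (rule divide_right_mono) simp
      qed
      finally show "infdist a K2 \<le> B / 2 ^ Suc n" by simp
    qed
  qed
  fix a assume a: "a \<in> K1"
  have "infdist a K2 \<le> 0"
  proof (rule LIMSEQ_le_const[OF LIMSEQ_divide_realpow_zero[of 2 B]])
    show "\<exists>N. \<forall>n\<ge>N. infdist a K2 \<le> B / 2 ^ n" using ind a by blast
  qed simp
  then have "infdist a K2 = 0" using infdist_nonneg[of a K2] by simp
  then have "a \<in> closure K2" using in_closure_iff_infdist_zero[OF K2(2)] by simp
  then show "a \<in> K2" using cl2 by simp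
qed

definition B0 :: "(real \<times> real) set" where "B0 = {0..1} \<times> {0..1}"
definition SS :: "nat \<Rightarrow> (real \<times> real) set" where "SS n = (FF ^^ n) B0"

lemma Cs_B0: "Cs \<subseteq> B0"
  unfolding Cs_def Ts_def B0_def by auto

lemma FF_B0: "FF B0 \<subseteq> B0"
  unfolding FF_def hm_def using Cs_B0 by (auto simp: B0_def)

lemma SS_compact: "compact (SS n)"
  unfolding SS_def by (induction n) (auto simp: B0_def compact_Times FF_compact)

lemma SS_Suc: "SS (Suc n) = FF (SS n)" unfolding SS_def by simp

lemma SS_dec: "SS (Suc n) \<subseteq> SS n"
  by (induction n) (auto simp: SS_def FF_B0 intro: FF_mono[THEN subsetD])

lemma SS_dec': "m \<le> n \<Longrightarrow> SS n \<subseteq> SS m"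
  by (induction n rule: dec_induct) (use SS_dec in auto)

lemma zero_SS: "(0,0) \<in> SS n"
proof (induction n)
  case 0 then show ?case by (simp add: SS_def B0_def)
next
  case (Suc n)
  have "hm (0,0) (0,0) = (0,0)" by (simp add: hm_def)
  moreover have "((0,0),(0,0)) \<in> SS n \<times> Cs" using Suc by (simp add: Cs_def Ts_def)
  ultimately show ?case unfolding SS_Suc using FF_I[of "(0,0)" "SS n" "(0,0)"] by simp
qed

definition K0 where "K0 = (\<Inter>n. SS n)"

lemma K0_props: "compact K0" "K0 \<noteq> {}" "K0 = FF K0"
proof -
  show "compact K0"
  proof -
    have "K0 = SS 0 \<inter> K0" unfolding K0_def by blast
    moreover have "closed K0" unfolding K0_def by (intro closed_INT ballI compact_imp_closed SS_compact)
    ultimately show ?thesis using compact_Int_closed[OF SS_compact] by metis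
  qed
  show "K0 \<noteq> {}" unfolding K0_def using zero_SS by blast
  show "K0 = FF K0"
  proof
    show "FF K0 \<subseteq> K0" unfolding K0_def
    proof
      fix q assume q: "q \<in> FF (\<Inter>n. SS n)"
      show "q \<in> (\<Inter>n. SS n)"
      proof
        fix n
        have "FF (\<Inter>n. SS n) \<subseteq> FF (SS n)" by (rule FF_mono) blast
        then have "q \<in> SS (Suc n)" using q SS_Suc by auto
        then show "q \<in> SS n" using SS_dec by blast
      qed
    qed
  next
    show "K0 \<subseteq> FF K0"
    proof
      fix p assume p: "p \<in> K0"
      define E where "E n = {z \<in> SS n \<times> Cs. hm (fst z) (snd z) = p}" for n
      have "compact (E n)" for n
      proof -
        have "E n = (SS n \<times> Cs) \<inter> (\<lambda>z. hm (fst z) (snd z)) -` {p}" unfolding E_def by auto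
        moreover have "closed ((\<lambda>z. hm (fst z) (snd z)) -` {p})"
          unfolding hm_def by (intro closed_vimage closed_singleton continuous_intros)
        ultimately show ?thesis using compact_Int_closed compact_Times SS_compact Cs_compact by metis
      qed
      moreover have "E n \<noteq> {}" for n
      proof -
        have "p \<in> SS (Suc n)" using p unfolding K0_def by blast
        then obtain z where "z \<in> SS n \<times> Cs" "p = hm (fst z) (snd z)" unfolding SS_Suc FF_def by blast
        then show ?thesis unfolding E_def by blast
      qed
      moreover have "m \<le> n \<Longrightarrow> E n \<subseteq> E m" for m n unfolding E_def using SS_dec' by auto
      ultimately have "\<Inter>(range E) \<noteq> {}" by (rule compact_nest)
      then obtain z where z: "\<And>n. z \<in> E n" by blast
      have "fst z \<in> K0" unfolding K0_def using z unfolding E_def by (simp add: mem_Times_iff)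
      moreover have "snd z \<in> Cs" "hm (fst z) (snd z) = p" using z[of 0] unfolding E_def by (auto simp: mem_Times_iff)
      ultimately have "fst z \<in> K0" "snd z \<in> Cs" "hm (fst z) (snd z) = p" by auto
      then show "p \<in> FF K0" using FF_I by metis
    qed
  qed
qed

lemma Kset_props: "compact Kset" "Kset \<noteq> {}" "Kset = FF Kset"
proof -
  have ex: "\<exists>!K. K \<noteq> {} \<and> compact K \<and> K = Umap ` K \<union> D0map ` K \<union> (\<Union>k. \<Union>n\<in>{1..}. Dmap k n ` K)"
  proof (rule ex1I[of _ K0])
    show "K0 \<noteq> {} \<and> compact K0 \<and> K0 = Umap ` K0 \<union> D0map ` K0 \<union> (\<Union>k. \<Union>n\<in>{1..}. Dmap k n ` K0)"
      unfolding F_eq using K0_props by simp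
  next
    fix K assume "K \<noteq> {} \<and> compact K \<and> K = Umap ` K \<union> D0map ` K \<union> (\<Union>k. \<Union>n\<in>{1..}. Dmap k n ` K)"
    then have "K \<noteq> {}" "compact K" "K = FF K" unfolding F_eq by auto
    then show "K = K0" using uniq_sub K0_props by (metis subset_antisym)
  qed
  have "Kset \<noteq> {} \<and> compact Kset \<and> Kset = Umap ` Kset \<union> D0map ` Kset \<union> (\<Union>k. \<Union>n\<in>{1..}. Dmap k n ` Kset)"
    unfolding Kset_def by (rule theI'[OF ex])
  then show "compact Kset" "Kset \<noteq> {}" "Kset = FF Kset" unfolding F_eq by auto
qed


lemma zero_Kset: "(0,0) \<in> Kset"
proof -
  obtain q where q: "q \<in> Kset" using Kset_props by blast
  have "(1/2::real)^n *\<^sub>R q \<in> Kset" for n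
  proof (induction n)
    case 0 then show ?case using q by simp
  next
    case (Suc n)
    have "hm ((1/2::real)^n *\<^sub>R q) (0,0) = (1/2::real)^Suc n *\<^sub>R q" unfolding hm_def by (simp add: zero_prod_def[symmetric])
    moreover have "(0,0) \<in> Cs" by (simp add: Cs_def Ts_def)
    ultimately have "(1/2::real)^Suc n *\<^sub>R q \<in> FF Kset" using Suc FF_I by metis
    then show ?case using Kset_props by simp
  qed
  moreover have "(\<lambda>n. (1/2::real)^n *\<^sub>R q) \<longlonglongrightarrow> 0 *\<^sub>R q"
    by (intro tendsto_scaleR LIMSEQ_realpow_zero tendsto_const) auto
  ultimately have "0 \<in> Kset" unfolding scaleR_zero_left using closed_sequentially compact_imp_closed Kset_props(1) by metis
  then show ?thesis by (simp add: zero_prod_def)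
qed

lemma addr_Kset: "(\<forall>i. e i \<in> Cs) \<Longrightarrow> (\<Sum>i<n. (1/2::real)^Suc i *\<^sub>R e i) \<in> Kset"
proof (induction n arbitrary: e)
  case 0 then show ?case using zero_Kset by (simp add: zero_prod_def)
next
  case (Suc n)
  have IH: "(\<Sum>i<n. (1/2::real)^Suc i *\<^sub>R e (Suc i)) \<in> Kset" using Suc by simp
  have eq: "(\<Sum>i<Suc n. (1/2::real)^Suc i *\<^sub>R e i) = hm (\<Sum>i<n. (1/2::real)^Suc i *\<^sub>R e (Suc i)) (e 0)"
    unfolding hm_def sum.lessThan_Suc_shift by (simp add: scaleR_add_right scaleR_sum_right add.commute)
  have "hm (\<Sum>i<n. (1/2::real)^Suc i *\<^sub>R e (Suc i)) (e 0) \<in> FF Kset"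
    using IH Suc.prems by (intro FF_I) auto
  then show ?case using eq Kset_props by simp
qed


definition hh :: "real \<Rightarrow> real" where
  "hh w = (if w \<le> 0 then 0 else 1 / real (nat \<lceil>1/w\<rceil>))"

lemma hh_prop:
  assumes "0 \<le> w" "w \<le> 1/2"
  shows "hh w \<in> Ts" "0 \<le> w - hh w" "w - hh w \<le> 2*w^2"
proof -
  have all: "hh w \<in> Ts \<and> 0 \<le> w - hh w \<and> w - hh w \<le> 2*w^2"
  proof (cases "w = 0")
    case True then show ?thesis by (simp add: hh_def Ts_def)
  next
    case False
    then have wp: "w > 0" using assms by simp
    define m where "m = nat \<lceil>1/w\<rceil>"
    have iw: "1/w \<ge> 2" using wp assms by (simp add: field_simps)
    have m1: "real m \<ge> 1/w" unfolding m_def using iw by linarith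
    have m2: "real m < 1/w + 1" unfolding m_def using iw by linarith
    have m3: "m \<ge> 2" using m1 iw by linarith
    have h: "hh w = 1 / real m" unfolding hh_def m_def using wp by simp
    obtain k where k: "m = Suc k" using m3 by (cases m) auto
    have inT: "hh w \<in> Ts" unfolding h Ts_def k by blast
    have a1: "real m * w \<ge> 1" using m1 wp by (simp add: field_simps)
    have a2: "(real m - 1) * w < 1" using m2 wp by (simp add: field_simps)
    have mp: "real m > 0" using m3 by simp
    have b1: "hh w \<le> w" unfolding h using a1 mp by (simp add: field_simps)
    have b2: "real m * w - 1 < w" using a2 by (simp add: algebra_simps)
    have b3a: "w * 1 \<le> w * (real m * w)" using a1 wp by (intro mult_left_mono) auto
    have b3: "w \<le> 2 * real m * w * w" using b3a wp mp by (simp add: algebra_simps)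
    have "real m * (w - hh w) \<le> real m * (2 * w^2)"
      unfolding h using b2 b3 mp by (simp add: algebra_simps power2_eq_square)
    then have b4: "w - hh w \<le> 2*w^2" using mp by simp
    show ?thesis using inT b1 b4 by simp
  qed
  then show "hh w \<in> Ts" "0 \<le> w - hh w" "w - hh w \<le> 2*w^2" by auto
qed


fun vv :: "(nat \<Rightarrow> nat) \<Rightarrow> real \<Rightarrow> nat \<Rightarrow> real" where
  "vv a x 0 = x"
| "vv a x (Suc i) = (if a (Suc i) = 0 then 2 * vv a x i - hh (2 * vv a x i) else 2 * vv a x i)"

definition ee :: "(nat \<Rightarrow> nat) \<Rightarrow> real \<Rightarrow> nat \<Rightarrow> real \<times> real" where
  "ee a x i = (if a (Suc i) = 0 then (hh (2 * vv a x i), 0) else (0,1))"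

definition zc :: "(nat \<Rightarrow> nat) \<Rightarrow> nat \<Rightarrow> nat" where "zc a n = card {i\<in>{1..n}. a i = 0}"
definition oc :: "(nat \<Rightarrow> nat) \<Rightarrow> nat \<Rightarrow> nat" where "oc a n = card {i\<in>{1..n}. a i \<noteq> 0}"

lemma set_Suc: "{i\<in>{1..Suc n}. P i} = (if P (Suc n) then insert (Suc n) {i\<in>{1..n}. P i} else {i\<in>{1..n}. P i})"
  by (auto simp: le_Suc_eq)

lemma zc_Suc: "zc a (Suc n) = zc a n + (if a (Suc n) = 0 then 1 else 0)"
  unfolding zc_def set_Suc by (auto)

lemma oc_Suc: "oc a (Suc n) = oc a n + (if a (Suc n) = 0 then 0 else 1)"
  unfolding oc_def set_Suc by (auto)

lemma zo: "zc a n + oc a n = n"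
  by (induction n) (auto simp: zc_Suc oc_Suc, simp_all add: zc_def oc_def)

lemma Vbound:
  assumes dens: "\<forall>n\<ge>N. real (card {i\<in>{1..n}. a i = 0}) \<ge> 0.4 * real n"
  shows "(2::real)^(oc a n) \<le> 4^(zc a n) * 2^N"
proof (cases "n \<ge> N")
  case True
  have "real (zc a n) \<ge> 0.4 * real n" using dens True unfolding zc_def by blast
  moreover have "real (zc a n) + real (oc a n) = real n" using zo[of a n] by linarith
  ultimately have "oc a n \<le> 2 * zc a n" by linarith
  then have "(2::real)^(oc a n) \<le> 2^(2 * zc a n)" by (rule power_increasing) simp
  also have "\<dots> = 4^(zc a n)" by (simp add: power_mult)
  also have "\<dots> \<le> 4^(zc a n) * 2^N" by simp
  finally show ?thesis .
next
  case False
  have "oc a n \<le> N" using zo[of a n] False by linarith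
  then have "(2::real)^(oc a n) \<le> 2^N" by (rule power_increasing) simp
  also have "\<dots> \<le> 4^(zc a n) * 2^N" by simp
  finally show ?thesis .
qed

lemma vv_bound:
  assumes dens: "\<forall>n\<ge>N. real (card {i\<in>{1..n}. a i = 0}) \<ge> 0.4 * real n"
    and x: "0 \<le> x" "x \<le> 1 / (32 * 2^N)"
  shows "0 \<le> vv a x n \<and> vv a x n \<le> 2^(oc a n) / (4^(zc a n) * 32 * 2^N)"
proof (induction n)
  case 0 then show ?case using x by (simp add: zc_def oc_def)
next
  case (Suc n)
  define V where "V = (2::real)^(oc a n) / (4^(zc a n) * 32 * 2^N)"
  have V32: "V \<le> 1/32" unfolding V_def using Vbound[OF dens, of n] by (simp add: field_simps)
  have v: "0 \<le> vv a x n" "vv a x n \<le> V" using Suc unfolding V_def by auto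
  show ?case
  proof (cases "a (Suc n) = 0")
    case True
    let ?w = "2 * vv a x n"
    have w: "0 \<le> ?w" "?w \<le> 1/2" using v V32 by auto
    have e1: "vv a x (Suc n) = ?w - hh ?w" using True by simp
    have e2: "?w - hh ?w \<le> 8 * (vv a x n)^2" using hh_prop(3)[OF w] by (simp add: power2_eq_square)
    have e3: "(vv a x n)^2 \<le> V * V" using v by (simp add: power2_eq_square mult_mono)
    have e4: "8 * (V * V) \<le> V / 4"
    proof -
      have "V * V \<le> (1/32) * V" using V32 v by (intro mult_right_mono) auto
      then show ?thesis by simp
    qed
    have e5: "V / 4 = 2^(oc a (Suc n)) / (4^(zc a (Suc n)) * 32 * 2^N)"
      unfolding V_def using True by (simp add: zc_Suc oc_Suc field_simps)
    have "vv a x (Suc n) \<le> V / 4" using e1 e2 e3 e4 by linarith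
    then show ?thesis using hh_prop(2)[OF w] e1 e5 by simp
  next
    case False
    have "vv a x (Suc n) = 2 * vv a x n" using False by simp
    moreover have "2 * V = 2^(oc a (Suc n)) / (4^(zc a (Suc n)) * 32 * 2^N)"
      unfolding V_def using False by (simp add: zc_Suc oc_Suc field_simps)
    ultimately show ?thesis using v by simp
  qed
qed


lemma vv_le: 
  assumes dens: "\<forall>n\<ge>N. real (card {i\<in>{1..n}. a i = 0}) \<ge> 0.4 * real n"
    and x: "0 \<le> x" "x \<le> 1 / (32 * 2^N)"
  shows "0 \<le> vv a x n" "vv a x n \<le> 1/32"
proof -
  have "(2::real)^(oc a n) / (4^(zc a n) * 32 * 2^N) \<le> 1/32"
    using Vbound[OF dens, of n] by (simp add: field_simps)
  moreover have "0 \<le> vv a x n \<and> vv a x n \<le> 2^(oc a n) / (4^(zc a n) * 32 * 2^N)" using vv_bound[OF assms, of n] .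
  ultimately show "0 \<le> vv a x n" "vv a x n \<le> 1/32" by linarith+
qed

theorem mainTheorem9:
  shows "\<exists>N0::nat. \<forall>N\<ge>N0. \<forall>(y::real) (a::nat \<Rightarrow> nat).
     y \<in> {0..1} \<longrightarrow>
     (\<forall>i\<ge>1. a i \<in> {0, 1}) \<longrightarrow>
     y = (\<Sum>i. real (a (Suc i)) / 2 ^ (Suc i)) \<longrightarrow>
     (\<forall>n\<ge>N. real (card {i\<in>{1..n}. a i = 0}) \<ge> 0.4 * real n) \<longrightarrow>
     {0..1 / (56 * 2 ^ N)} \<subseteq> Kslice y"
proof (intro exI[of _ 0] allI impI subsetI)
  fix N :: nat and y :: real and a :: "nat \<Rightarrow> nat" and x :: real
  assume a01: "\<forall>i\<ge>1. a i \<in> {0, 1}" and yeq: "y = (\<Sum>i. real (a (Suc i)) / 2 ^ (Suc i))"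
    and dens: "\<forall>n\<ge>N. real (card {i\<in>{1..n}. a i = 0}) \<ge> 0.4 * real n"
    and xI: "x \<in> {0..1 / (56 * 2 ^ N)}"
  have x: "0 \<le> x" "x \<le> 1 / (32 * 2^N)" using xI by (auto simp: field_simps)
  note vl = vv_le[OF dens x]
  have eC: "\<forall>i. ee a x i \<in> Cs"
  proof
    fix i
    have "0 \<le> 2 * vv a x i" "2 * vv a x i \<le> 1/2" using vl[of i] by auto
    then show "ee a x i \<in> Cs" unfolding ee_def Cs_def using hh_prop(1) by auto
  qed
  define P where "P n = (\<Sum>i<n. (1/2::real)^Suc i *\<^sub>R ee a x i)" for n
  have PK: "P n \<in> Kset" for n unfolding P_def using addr_Kset[OF eC] .
  have fstP: "fst (P n) = x - vv a x n / 2^n" for n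
  proof (induction n)
    case 0 then show ?case by (simp add: P_def)
  next
    case (Suc n)
    have "fst (P (Suc n)) = fst (P n) + (1/2)^Suc n * fst (ee a x n)" by (simp add: P_def)
    also have "\<dots> = x - vv a x (Suc n) / 2^Suc n"
      unfolding Suc by (simp add: ee_def field_simps)
    finally show ?case .
  qed
  have sndP: "snd (P n) = (\<Sum>i<n. real (a (Suc i)) / 2 ^ (Suc i))" for n
  proof -
    have "snd (P n) = (\<Sum>i<n. (1/2::real)^Suc i * snd (ee a x i))" unfolding P_def snd_sum by simp
    also have "\<dots> = (\<Sum>i<n. real (a (Suc i)) / 2 ^ (Suc i))"
    proof (rule sum.cong[OF refl])
      fix i
      have "a (Suc i) \<in> {0,1}" using a01 by simp
      then show "(1/2::real)^Suc i * snd (ee a x i) = real (a (Suc i)) / 2 ^ (Suc i)"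
        unfolding ee_def by (auto simp: field_simps)
    qed
    finally show ?thesis .
  qed
  have summ: "summable (\<lambda>i. real (a (Suc i)) / 2 ^ (Suc i))"
  proof (rule summable_comparison_test[of _ "\<lambda>i. (1/2::real)^Suc i"])
    show "\<exists>N. \<forall>n\<ge>N. norm (real (a (Suc n)) / 2 ^ Suc n) \<le> (1/2) ^ Suc n"
    proof (intro exI allI impI)
      fix n :: nat
      have "a (Suc n) \<in> {0,1}" using a01 by simp
      then show "norm (real (a (Suc n)) / 2 ^ Suc n) \<le> (1/2) ^ Suc n" by (auto simp: power_divide)
    qed
    show "summable (\<lambda>i. (1/2::real)^Suc i)"
      using summable_Suc_iff[where f="\<lambda>i. (1/2::real)^i"] summable_geometric[of "1/2::real"] by simp
  qed
  have t1: "(\<lambda>n. vv a x n / 2^n) \<longlonglongrightarrow> 0"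
  proof (rule Lim_null_comparison[of _ "\<lambda>n. 1 / 2^n"])
    show "\<forall>\<^sub>F n in sequentially. norm (vv a x n / 2^n) \<le> 1 / 2^n"
    proof (intro always_eventually allI)
      fix n
      have "0 \<le> vv a x n" "vv a x n \<le> 1" using vl[of n] by auto
      then show "norm (vv a x n / 2^n) \<le> 1 / 2^n" by (simp add: divide_right_mono)
    qed
    show "(\<lambda>n. 1 / (2::real)^n) \<longlonglongrightarrow> 0" by (rule LIMSEQ_divide_realpow_zero) simp
  qed
  have "(\<lambda>n. (fst (P n), snd (P n))) \<longlonglongrightarrow> (x - 0, y)"
    unfolding fstP sndP yeq by (intro tendsto_Pair tendsto_diff tendsto_const t1 summable_LIMSEQ summ)
  then have "P \<longlonglongrightarrow> (x, y)" by simp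
  then have "(x, y) \<in> Kset" by (rule closed_sequentially[of Kset P "(x,y)", OF compact_imp_closed[OF Kset_props(1)] PK])
  then show "x \<in> Kslice y" by (simp add: Kslice_def)
qed

end
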